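(* Let $d\geq2$, neural network dimensions $\mathbf{N}=(N_L=1,N_{L-1},\dots,N_1,N_0=d)$ with $L\geq2$, $r\in\mathbb{N}$, $\epsilon>0$, $\hat\epsilon\in(0,1/2)$, $\mathcal{R}\in\mathcal{CF}^{\epsilon,\hat\epsilon}_r$, $a\in[1/2,1]$ and $\kappa\in[1/4,3/4]$. For $\delta\geq0$ and $k\in\mathbb{N}$ let $x^{k,\delta}=(a(k+1-\kappa)^{-1},0,\dots,0)\in\mathbb{R}^d$ if $k$ is odd and $x^{k,\delta}=(a(k+1-\kappa)^{-1},\delta,0,\dots,0)$ if $k$ is even, and let $f_a(x)=1$ if $\lceil a/x_1\rceil$ is an odd integer and $f_a(x)=0$ otherwise. Then for any $\delta\in(0,\varepsilon'(r))$ and any $$\phi\in\operatorname{argmin}_{\epsilon,\ \varphi\in\mathcal{NN}_{\mathbf{N},L}}\mathcal{R}\big(\{\varphi(x^{j,\delta})\}_{j=1}^r,\{f_a(x^{j,\delta})\}_{j=1}^r\big)$$ we have $|\phi(x^{k,\delta})-f_a(x^{k,\delta})|\leq\hat\epsilon$ for all $k\in\{1,\dots,r\}$.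
   Context: $\mathcal{NN}_{\mathbf{N},L}$ is the set of maps $\varphi=W^L\rho\cdots\rho W^1:\mathbb{R}^d\to\mathbb{R}$ with affine $W^\ell:\mathbb{R}^{N_{\ell-1}}\to\mathbb{R}^{N_\ell}$ and $\rho(t)=\max\{0,t\}$ coordinatewise. $\mathcal{CF}_r$: all $\mathcal{R}:\mathbb{R}^r\times\mathbb{R}^r\to\mathbb{R}_+\cup\{\infty\}$ with $\mathcal{R}(v,w)=0$ iff $v=w$; $\mathcal{CF}^{\epsilon,\hat\epsilon}_r=\{\mathcal{R}\in\mathcal{CF}_r:\mathcal{R}(v,w)\leq\epsilon\Rightarrow\|v-w\|_\infty\leq\hat\epsilon\}$. $\operatorname{argmin}_{\epsilon,\,x\in X}g(x)=\{x\in X:g(x)\leq g(y)+\epsilon\ \forall y\in X\}$. $\varepsilon'(n)=[(4n+3)(4n+4)]^{-1}$. *)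

theory Defs
  imports "HOL-Analysis.Analysis"
begin

text \<open>Vectors in R^n are represented as functions nat => real, coordinates 0..n-1
  (coordinate i corresponds to the paper's coordinate i+1).
  Network dimensions N = (N_0 = d, N_1, ..., N_L = 1) are a list of length L+1,
  N ! l = N_l. Parameters P l = (W, b) give the affine map of layer l (1 <= l <= L):
  (W^l x)_i = sum_{j < N_(l-1)} W i j * x j + b i  for i < N_l.\<close>

definition relu :: "real \<Rightarrow> real" where
  "relu t = max 0 t"

definition affine_layer ::
  "nat list \<Rightarrow> (nat \<Rightarrow> (nat \<Rightarrow> nat \<Rightarrow> real) \<times> (nat \<Rightarrow> real)) \<Rightarrow> nat \<Rightarrow> (nat \<Rightarrow> real) \<Rightarrow> (nat \<Rightarrow> real)"
where
  "affine_layer N P l x = (\<lambda>i. if i < N ! l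
      then (\<Sum>j<N ! (l - 1). fst (P l) i j * x j) + snd (P l) i else 0)"

fun nn_hidden ::
  "nat list \<Rightarrow> (nat \<Rightarrow> (nat \<Rightarrow> nat \<Rightarrow> real) \<times> (nat \<Rightarrow> real)) \<Rightarrow> nat \<Rightarrow> (nat \<Rightarrow> real) \<Rightarrow> (nat \<Rightarrow> real)"
where
  "nn_hidden N P 0 x = (\<lambda>i. if i < N ! 0 then x i else 0)"
| "nn_hidden N P (Suc l) x = (\<lambda>i. relu (affine_layer N P (Suc l) (nn_hidden N P l x) i))"

definition nn_eval ::
  "nat list \<Rightarrow> nat \<Rightarrow> (nat \<Rightarrow> (nat \<Rightarrow> nat \<Rightarrow> real) \<times> (nat \<Rightarrow> real)) \<Rightarrow> (nat \<Rightarrow> real) \<Rightarrow> real"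
where
  "nn_eval N L P x = affine_layer N P L (nn_hidden N P (L - 1) x) 0"

definition NN :: "nat list \<Rightarrow> nat \<Rightarrow> ((nat \<Rightarrow> real) \<Rightarrow> real) set" where
  "NN N L = {\<phi>. \<exists>P. \<phi> = nn_eval N L P}"

definition CF :: "nat \<Rightarrow> (real list \<Rightarrow> real list \<Rightarrow> ennreal) \<Rightarrow> bool" where
  "CF r R \<longleftrightarrow> (\<forall>v w. length v = r \<longrightarrow> length w = r \<longrightarrow> (R v w = 0 \<longleftrightarrow> v = w))"

definition CF_eps :: "nat \<Rightarrow> real \<Rightarrow> real \<Rightarrow> (real list \<Rightarrow> real list \<Rightarrow> ennreal) \<Rightarrow> bool" where
  "CF_eps r \<epsilon> \<epsilon>' R \<longleftrightarrow> CF r R \<and>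
     (\<forall>v w. length v = r \<longrightarrow> length w = r \<longrightarrow> R v w \<le> ennreal \<epsilon> \<longrightarrow>
        (\<forall>i<r. \<bar>v ! i - w ! i\<bar> \<le> \<epsilon>'))"

definition argmin_eps :: "real \<Rightarrow> 'a set \<Rightarrow> ('a \<Rightarrow> ennreal) \<Rightarrow> 'a set" where
  "argmin_eps \<epsilon> X g = {x \<in> X. \<forall>y\<in>X. g x \<le> g y + ennreal \<epsilon>}"

definition eps_prime :: "nat \<Rightarrow> real" where
  "eps_prime n = 1 / ((4 * real n + 3) * (4 * real n + 4))"

definition xpt :: "real \<Rightarrow> real \<Rightarrow> nat \<Rightarrow> real \<Rightarrow> (nat \<Rightarrow> real)" where
  "xpt a \<kappa> k \<delta> = (\<lambda>i. if i = 0 then a / (real k + 1 - \<kappa>)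
                        else if i = 1 \<and> even k then \<delta> else 0)"

definition f_a :: "real \<Rightarrow> (nat \<Rightarrow> real) \<Rightarrow> real" where
  "f_a a x = (if odd (\<lceil>a / x 0\<rceil>) then 1 else 0)"

end

theory Submission
  imports Defs
begin

definition Pc :: "nat \<Rightarrow> real \<Rightarrow> nat \<Rightarrow> (nat \<Rightarrow> nat \<Rightarrow> real) \<times> (nat \<Rightarrow> real)" where
  "Pc L \<delta> l = ((\<lambda>i j. if l = 1 then (if i = 0 \<and> j = 1 then 1 else 0)
                     else if l = L then (if i = 0 \<and> j = 0 then 1 / \<delta> else 0)
                     else (if i = 0 \<and> j = 0 then 1 else 0)), (\<lambda>i. 0))"

lemma sum_single:
  fixes g :: "nat \<Rightarrow> real"
  assumes "c < n"
  shows "(\<Sum>j<n. (if j = c then t else 0) * g j) = t * g c"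
proof -
  have "(\<Sum>j<n. (if j = c then t else 0) * g j) = (\<Sum>j<n. if j = c then t * g c else 0)"
    by (rule sum.cong) auto
  also have "\<dots> = t * g c" using assms by (simp add: sum.delta)
  finally show ?thesis .
qed

lemma hidden_Pc:
  assumes "L \<ge> 2" "N ! 0 \<ge> 2" "\<forall>l\<le>L. N ! l \<ge> 1"
  shows "1 \<le> l \<Longrightarrow> l < L \<Longrightarrow> nn_hidden N (Pc L \<delta>) l x 0 = relu (x 1)"
proof (induction l)
  case 0 then show ?case by simp
next
  case (Suc l)
  have pos: "N ! Suc l \<ge> 1" using assms(3) Suc.prems by auto
  show ?case
  proof (cases "l = 0")
    case True
    have W: "fst (Pc L \<delta> (Suc l)) 0 = (\<lambda>j. (if j = 1 then 1 else 0))"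
      using True by (simp add: Pc_def)
    have "affine_layer N (Pc L \<delta>) (Suc l) (nn_hidden N (Pc L \<delta>) l x) 0
        = (\<Sum>j<N ! 0. (if j = 1 then 1 else 0) * (if j < N ! 0 then x j else 0))"
      using True pos unfolding affine_layer_def W by (simp add: Pc_def)
    also have "\<dots> = x 1"
      using assms(2) sum_single[of 1 "N ! 0" 1 "\<lambda>j. if j < N ! 0 then x j else 0"] by simp
    finally show ?thesis using True by simp
  next
    case False
    have pl: "N ! l \<ge> 1" using assms(3) Suc.prems by auto
    have IH: "nn_hidden N (Pc L \<delta>) l x 0 = relu (x 1)" using Suc False by auto
    have "(\<Sum>j<N ! l. (if j = 0 then 1 else 0) * nn_hidden N (Pc L \<delta>) l x j)
          = nn_hidden N (Pc L \<delta>) l x 0"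
      using pl sum_single[of 0 "N ! l" 1] by simp
    have W: "fst (Pc L \<delta> (Suc l)) 0 = (\<lambda>j. (if j = 0 then 1 else 0))"
      "snd (Pc L \<delta> (Suc l)) 0 = 0"
      using False Suc.prems by (auto simp add: Pc_def)
    have "affine_layer N (Pc L \<delta>) (Suc l) (nn_hidden N (Pc L \<delta>) l x) 0
        = (\<Sum>j<N ! l. (if j = 0 then 1 else 0) * nn_hidden N (Pc L \<delta>) l x j)"
      using pos unfolding affine_layer_def W by simp
    then show ?thesis using IH \<open>(\<Sum>j<N ! l. _) = _\<close>
      by (simp add: relu_def)
  qed
qed

lemma eval_Pc:
  assumes "L \<ge> 2" "N ! 0 \<ge> 2" "\<forall>l\<le>L. N ! l \<ge> 1" "N ! L = 1"
  shows "nn_eval N L (Pc L \<delta>) x = relu (x 1) / \<delta>"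
proof -
  have h: "nn_hidden N (Pc L \<delta>) (L - 1) x 0 = relu (x 1)"
    using hidden_Pc[OF assms(1-3)] assms(1) by auto
  have pl: "N ! (L - 1) \<ge> 1" using assms(3) by auto
  have "(\<Sum>j<N ! (L - 1). (if j = 0 then 1 / \<delta> else 0) * nn_hidden N (Pc L \<delta>) (L - 1) x j)
        = (1 / \<delta>) * nn_hidden N (Pc L \<delta>) (L - 1) x 0"
    using pl sum_single[of 0 "N ! (L - 1)" "1 / \<delta>"] by simp
  then show ?thesis using assms h
    by (simp add: nn_eval_def affine_layer_def Pc_def)
qed

theorem lemma5p27:
  fixes d L r :: nat and N :: "nat list" and \<epsilon> \<epsilon>' a \<kappa> \<delta> :: real
    and R :: "real list \<Rightarrow> real list \<Rightarrow> ennreal" and \<phi> :: "(nat \<Rightarrow> real) \<Rightarrow> real"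
  assumes "d \<ge> 2" and "L \<ge> 2"
    and "length N = L + 1" and "N ! 0 = d" and "N ! L = 1" and "\<forall>l\<le>L. N ! l \<ge> 1"
    and "\<epsilon> > 0" and "0 < \<epsilon>'" and "\<epsilon>' < 1/2"
    and "CF_eps r \<epsilon> \<epsilon>' R"
    and "1/2 \<le> a" and "a \<le> 1" and "1/4 \<le> \<kappa>" and "\<kappa> \<le> 3/4"
    and "0 < \<delta>" and "\<delta> < eps_prime r"
    and "\<phi> \<in> argmin_eps \<epsilon> (NN N L)
           (\<lambda>\<psi>. R (map (\<lambda>j. \<psi> (xpt a \<kappa> j \<delta>)) [1..<r+1])
                   (map (\<lambda>j. f_a a (xpt a \<kappa> j \<delta>)) [1..<r+1]))"
  shows "\<forall>k\<in>{1..r}. \<bar>\<phi> (xpt a \<kappa> k \<delta>) - f_a a (xpt a \<kappa> k \<delta>)\<bar> \<le> \<epsilon>'"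
proof -
  define \<psi> where "\<psi> = nn_eval N L (Pc L \<delta>)"
  have psiNN: "\<psi> \<in> NN N L" unfolding NN_def \<psi>_def by auto
  have fval: "f_a a (xpt a \<kappa> k \<delta>) = (if even k then 1 else 0)" for k :: nat
  proof -
    have pos: "real k + 1 - \<kappa> > 0" using assms(14) by simp
    have "a / (a / (real k + 1 - \<kappa>)) = real k + 1 - \<kappa>" using pos assms(11) by simp
    moreover have "\<lceil>real k + 1 - \<kappa>\<rceil> = int k + 1"
      using assms(13,14) by (simp add: ceiling_eq_iff)
    ultimately show ?thesis by (simp add: f_a_def xpt_def)
  qed
  have psival: "\<psi> (xpt a \<kappa> k \<delta>) = f_a a (xpt a \<kappa> k \<delta>)" for k
    using eval_Pc[OF assms(2) _ assms(6) assms(5)] assms(1,4,15) fval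
    by (simp add: \<psi>_def xpt_def relu_def)
  let ?w = "map (\<lambda>j. f_a a (xpt a \<kappa> j \<delta>)) [1..<r+1]"
  let ?v = "map (\<lambda>j. \<phi> (xpt a \<kappa> j \<delta>)) [1..<r+1]"
  have CF: "CF r R" using assms(10) by (simp add: CF_eps_def)
  have "map (\<lambda>j. \<psi> (xpt a \<kappa> j \<delta>)) [1..<r+1] = ?w" using psival by simp
  then have R0: "R (map (\<lambda>j. \<psi> (xpt a \<kappa> j \<delta>)) [1..<r+1]) ?w = 0"
    using CF unfolding CF_def by simp
  have "R ?v ?w \<le> R (map (\<lambda>j. \<psi> (xpt a \<kappa> j \<delta>)) [1..<r+1]) ?w + ennreal \<epsilon>"
    using assms(17) psiNN unfolding argmin_eps_def by blast
  then have le: "R ?v ?w \<le> ennreal \<epsilon>" using R0 by simp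
  have all: "\<forall>i<r. \<bar>?v ! i - ?w ! i\<bar> \<le> \<epsilon>'"
  proof -
    have "length ?v = r" "length ?w = r" by simp_all
    then show ?thesis using assms(10) le unfolding CF_eps_def by blast
  qed
  show ?thesis
  proof
    fix k assume k: "k \<in> {1..r}"
    then have "k - 1 < r" by auto
    moreover have "[1..<r+1] ! (k - 1) = k" using k by (subst nth_upt) auto
    moreover have "k - 1 < length [1..<r+1]" using k by auto
    ultimately have "?v ! (k - 1) = \<phi> (xpt a \<kappa> k \<delta>)" "?w ! (k - 1) = f_a a (xpt a \<kappa> k \<delta>)"
      by (metis nth_map)+
    then show "\<bar>\<phi> (xpt a \<kappa> k \<delta>) - f_a a (xpt a \<kappa> k \<delta>)\<bar> \<le> \<epsilon>'"
      using all \<open>k - 1 < r\<close> by metis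
  qed
qed

end
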